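(* Let $\mathscr G=(\mathscr V,\mathscr E)$ be a finite connected graph with $N$ vertices and $M\ge0$ an integer. The immediate exchange model $(Y_t)$ on $\mathscr C_{N,M}$ has a unique stationary distribution $\pi_Y$, and $$\lim_{t\to\infty}P_\eta(Y_t=\xi)=\pi_Y(\xi)\quad\text{for all }\xi,\eta\in\mathscr C_{N,M},$$ where $P_\eta$ denotes the law of the process started from $Y_0=\eta$.
   Context: $\mathscr C_{N,M}$ is the set of maps $\xi:\mathscr V\to\mathbb N$ with $\sum_x\xi(x)=M$. The immediate exchange model is the discrete-time Markov chain on $\mathscr C_{N,M}$: at each step an edge $(x,y)\in\mathscr E$ is chosen uniformly at random, independent $U_1$ uniform on $\{0,\dots,Y_t(x)\}$ and $U_2$ uniform on $\{0,\dots,Y_t(y)\}$ are drawn, and $Y_{t+1}(x)=Y_t(x)-U_1+U_2$, $Y_{t+1}(y)=Y_t(y)-U_2+U_1$, $Y_{t+1}(z)=Y_t(z)$ for $z\notin\{x,y\}$. *)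

theory Defs
  imports "HOL-Probability.Probability"
begin

definition finite_connected_graph :: "'a set \<Rightarrow> ('a \<times> 'a) set \<Rightarrow> bool" where
  "finite_connected_graph V E \<longleftrightarrow>
     finite V \<and> V \<noteq> {} \<and> E \<subseteq> V \<times> V \<and> sym E \<and> (\<forall>x. (x, x) \<notin> E) \<and>
     (\<forall>x\<in>V. \<forall>y\<in>V. (x, y) \<in> E\<^sup>*)"

definition configs :: "'a set \<Rightarrow> nat \<Rightarrow> ('a \<Rightarrow> nat) set" where
  "configs V M = {\<xi>. (\<forall>x. x \<notin> V \<longrightarrow> \<xi> x = 0) \<and> (\<Sum>x\<in>V. \<xi> x) = M}"

text \<open>One step of the immediate exchange model. (If E is empty -- only possible for a
  single vertex -- the chain stays put.)\<close>
definition ie_step :: "('a \<times> 'a) set \<Rightarrow> ('a \<Rightarrow> nat) \<Rightarrow> ('a \<Rightarrow> nat) pmf" where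
  "ie_step E \<xi> =
     (if E = {} then return_pmf \<xi> else
      bind_pmf (pmf_of_set E) (\<lambda>(x, y).
      bind_pmf (pmf_of_set {0..\<xi> x}) (\<lambda>u1.
      bind_pmf (pmf_of_set {0..\<xi> y}) (\<lambda>u2.
      return_pmf (\<xi>(x := \<xi> x - u1 + u2, y := \<xi> y - u2 + u1))))))"

fun ie_law :: "('a \<times> 'a) set \<Rightarrow> nat \<Rightarrow> ('a \<Rightarrow> nat) \<Rightarrow> ('a \<Rightarrow> nat) pmf" where
  "ie_law E 0 \<eta> = return_pmf \<eta>"
| "ie_law E (Suc t) \<eta> = bind_pmf (ie_law E t \<eta>) (ie_step E)"

definition ie_stationary :: "'a set \<Rightarrow> ('a \<times> 'a) set \<Rightarrow> nat \<Rightarrow> ('a \<Rightarrow> nat) pmf \<Rightarrow> bool" where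
  "ie_stationary V E M \<pi> \<longleftrightarrow> set_pmf \<pi> \<subseteq> configs V M \<and> bind_pmf \<pi> (ie_step E) = \<pi>"

end

theory Submission
  imports Defs
begin


lemma pmf_bind_sum:
  assumes "finite S" "set_pmf p \<subseteq> S"
  shows "pmf (bind_pmf p f) y = (\<Sum>z\<in>S. pmf p z * pmf (f z) y)"
  unfolding pmf_bind using assms
  by (subst integral_measure_pmf[of S]) auto

lemma markov_conv:
  fixes K :: "'b \<Rightarrow> 'b pmf" and L :: "nat \<Rightarrow> 'b \<Rightarrow> 'b pmf" and S :: "'b set"
  assumes fin: "finite S" and KS: "\<And>x. x\<in>S \<Longrightarrow> set_pmf (K x) \<subseteq> S"
    and L0: "\<And>x. L 0 x = return_pmf x" and LS: "\<And>t x. L (Suc t) x = bind_pmf (L t x) K"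
    and z0: "z0 \<in> S" and reach: "\<And>x. x\<in>S \<Longrightarrow> z0 \<in> set_pmf (L k x)"
  shows "\<exists>\<pi>. (set_pmf \<pi> \<subseteq> S \<and> bind_pmf \<pi> K = \<pi>) \<and>
    (\<forall>\<pi>'. set_pmf \<pi>' \<subseteq> S \<and> bind_pmf \<pi>' K = \<pi>' \<longrightarrow> \<pi>' = \<pi>) \<and>
    (\<forall>\<xi>\<in>S. \<forall>\<eta>\<in>S. (\<lambda>t. pmf (L t \<eta>) \<xi>) \<longlonglongrightarrow> pmf \<pi> \<xi>)"
proof -
  have LSS: "set_pmf (L t x) \<subseteq> S" if "x \<in> S" for t x
    using that by (induction t) (auto simp: L0 LS dest: KS)
  have CK: "L (s + t) x = bind_pmf (L s x) (\<lambda>z. L t z)" for s t x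
    by (induction t) (simp_all add: L0 LS bind_return_pmf' bind_assoc_pmf)
  define P where "P t x y = pmf (L t x) y" for t x y
  have Psum: "P (s + t) x y = (\<Sum>z\<in>S. P s x z * P t z y)" if "x \<in> S" for s t x y
    unfolding P_def CK by (rule pmf_bind_sum[OF fin LSS[OF that]])
  have Pnn: "0 \<le> P t x y" for t x y unfolding P_def by simp
  have P1: "(\<Sum>z\<in>S. P t x z) = 1" if "x \<in> S" for t x
    unfolding P_def by (rule sum_pmf_eq_1[OF fin LSS[OF that]])
  have Sne: "S \<noteq> {}" using z0 by auto
  define \<delta> where "\<delta> = Min ((\<lambda>x. P k x z0) ` S)"
  have \<delta>pos: "0 < \<delta>" unfolding \<delta>_def using fin Sne reach
    by (subst Min_gr_iff) (auto simp: P_def pmf_positive)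
  have \<delta>le: "\<delta> \<le> P k x z0" if "x \<in> S" for x unfolding \<delta>_def using fin that by auto
  have conv: "\<exists>l. \<forall>x\<in>S. (\<lambda>t. P t x y) \<longlonglongrightarrow> l" for y
  proof -
    define Mx where "Mx t = Max ((\<lambda>x. P t x y) ` S)" for t
    define mn where "mn t = Min ((\<lambda>x. P t x y) ` S)" for t
    have Mxge: "P t x y \<le> Mx t" if "x \<in> S" for t x unfolding Mx_def using fin that by auto
    have mnle: "mn t \<le> P t x y" if "x \<in> S" for t x unfolding mn_def using fin that by auto
    have mnMx: "mn t \<le> Mx t" for t using mnle Mxge z0 by (meson order_trans)
    have upper: "P (s + t) x y \<le> c" if "x \<in> S" "\<And>z. z \<in> S \<Longrightarrow> P t z y \<le> c" for s t x c
    proof -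
      have "P (s + t) x y = (\<Sum>z\<in>S. P s x z * P t z y)" by (rule Psum[OF that(1)])
      also have "\<dots> \<le> (\<Sum>z\<in>S. P s x z * c)"
        by (rule sum_mono) (auto intro: mult_left_mono that(2) Pnn)
      also have "\<dots> = c" using P1[OF that(1)] by (simp add: sum_distrib_right[symmetric])
      finally show ?thesis .
    qed
    have lower: "c \<le> P (s + t) x y" if "x \<in> S" "\<And>z. z \<in> S \<Longrightarrow> c \<le> P t z y" for s t x c
    proof -
      have "c = (\<Sum>z\<in>S. P s x z * c)" using P1[OF that(1)] by (simp add: sum_distrib_right[symmetric])
      also have "\<dots> \<le> (\<Sum>z\<in>S. P s x z * P t z y)"
        by (rule sum_mono) (auto intro: mult_left_mono that(2) Pnn)
      also have "\<dots> = P (s + t) x y" by (rule Psum[OF that(1), symmetric])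
      finally show ?thesis .
    qed
    have Mxdec: "decseq Mx"
    proof (rule decseq_SucI)
      fix t
      have "Mx (Suc t) \<in> (\<lambda>x. P (Suc t) x y) ` S" unfolding Mx_def using fin Sne by (intro Max_in) auto
      then obtain x where x: "x \<in> S" "Mx (Suc t) = P (1 + t) x y" by auto
      show "Mx (Suc t) \<le> Mx t" unfolding x(2) by (rule upper[OF x(1) Mxge])
    qed
    have mninc: "incseq mn"
    proof (rule incseq_SucI)
      fix t
      have "mn (Suc t) \<in> (\<lambda>x. P (Suc t) x y) ` S" unfolding mn_def using fin Sne by (intro Min_in) auto
      then obtain x where x: "x \<in> S" "mn (Suc t) = P (1 + t) x y" by auto
      show "mn t \<le> mn (Suc t)" unfolding x(2) by (rule lower[OF x(1) mnle])
    qed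
    have contr: "Mx (k + t) - mn (k + t) \<le> (1 - \<delta>) * (Mx t - mn t)" for t
    proof -
      have key: "P (k + t) x y = \<delta> * P t z0 y + (\<Sum>z\<in>S. (P k x z - (if z = z0 then \<delta> else 0)) * P t z y)"
        if "x \<in> S" for x
      proof -
        have "(\<Sum>z\<in>S. (P k x z - (if z = z0 then \<delta> else 0)) * P t z y)
            = (\<Sum>z\<in>S. P k x z * P t z y) - (\<Sum>z\<in>S. (if z = z0 then \<delta> * P t z y else 0))"
          by (subst sum_subtractf[symmetric], rule sum.cong) (auto simp: left_diff_distrib)
        also have "\<dots> = P (k + t) x y - \<delta> * P t z0 y"
          using fin z0 by (simp add: Psum[OF that])
        finally show ?thesis by simp
      qed
      have coefnn: "0 \<le> P k x z - (if z = z0 then \<delta> else 0)" if "x \<in> S" for x z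
        using \<delta>le[OF that] Pnn[of k x z] by auto
      have coefsum: "(\<Sum>z\<in>S. P k x z - (if z = z0 then \<delta> else 0)) = 1 - \<delta>" if "x \<in> S" for x
        using fin z0 by (simp add: sum_subtractf P1[OF that])
      have up: "P (k + t) x y \<le> \<delta> * P t z0 y + (1 - \<delta>) * Mx t" if "x \<in> S" for x
      proof -
        have "(\<Sum>z\<in>S. (P k x z - (if z = z0 then \<delta> else 0)) * P t z y)
           \<le> (\<Sum>z\<in>S. (P k x z - (if z = z0 then \<delta> else 0)) * Mx t)"
          by (rule sum_mono, rule mult_left_mono[OF Mxge coefnn[OF that]])
        also have "\<dots> = (1 - \<delta>) * Mx t" by (simp add: sum_distrib_right[symmetric] coefsum[OF that])
        finally show ?thesis using key[OF that] by simp
      qed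
      have lo: "\<delta> * P t z0 y + (1 - \<delta>) * mn t \<le> P (k + t) x y" if "x \<in> S" for x
      proof -
        have "(1 - \<delta>) * mn t = (\<Sum>z\<in>S. (P k x z - (if z = z0 then \<delta> else 0)) * mn t)"
          by (simp add: sum_distrib_right[symmetric] coefsum[OF that])
        also have "\<dots> \<le> (\<Sum>z\<in>S. (P k x z - (if z = z0 then \<delta> else 0)) * P t z y)"
          by (rule sum_mono, rule mult_left_mono[OF mnle coefnn[OF that]])
        finally show ?thesis using key[OF that] by simp
      qed
      have "Mx (k + t) \<in> (\<lambda>x. P (k + t) x y) ` S" unfolding Mx_def using fin Sne by (intro Max_in) auto
      then obtain x1 where x1: "x1 \<in> S" "Mx (k + t) = P (k + t) x1 y" by auto
      have "mn (k + t) \<in> (\<lambda>x. P (k + t) x y) ` S" unfolding mn_def using fin Sne by (intro Min_in) auto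
      then obtain x2 where x2: "x2 \<in> S" "mn (k + t) = P (k + t) x2 y" by auto
      show ?thesis using up[OF x1(1)] lo[OF x2(1)] x1(2) x2(2) by (simp add: algebra_simps)
    qed
    define D where "D t = Mx t - mn t" for t
    have Dnn: "0 \<le> D t" for t using mnMx[of t] by (simp add: D_def)
    have Ddec: "D (Suc t) \<le> D t" for t
      using decseqD[OF Mxdec, of t "Suc t"] incseqD[OF mninc, of t "Suc t"] unfolding D_def by simp
    have Ddec': "D t \<le> D s" if "s \<le> t" for s t
      using that by (induction t) (auto intro: order_trans[OF Ddec] simp: le_Suc_eq)
    have D0: "D 0 \<le> 1"
    proof -
      have "Mx 0 \<le> 1" unfolding Mx_def using fin Sne by (subst Max_le_iff) (auto simp: P_def pmf_le_1)
      moreover have "0 \<le> mn 0" unfolding mn_def using fin Sne by (subst Min_ge_iff) (auto simp: Pnn)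
      ultimately show ?thesis by (simp add: D_def)
    qed
    have Dj: "D (j * k) \<le> (1 - \<delta>) ^ j" for j
    proof (induction j)
      case 0 then show ?case using D0 by simp
    next
      case (Suc j)
      have "D (Suc j * k) = D (k + j * k)" by (simp add: add.commute)
      also have "\<dots> \<le> (1 - \<delta>) * D (j * k)" using contr unfolding D_def .
      also have "\<dots> \<le> (1 - \<delta>) * (1 - \<delta>) ^ j"
        using Suc.IH \<delta>le[OF z0] \<delta>pos by (intro mult_left_mono) (auto simp: P_def pmf_le_1 intro: order_trans[OF _ pmf_le_1])
      finally show ?case by simp
    qed
    have \<delta>1: "\<delta> \<le> 1" using \<delta>le[OF z0] by (simp add: P_def pmf_le_1 order_trans[OF _ pmf_le_1])
    have Dlim: "D \<longlonglongrightarrow> 0"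
    proof (rule LIMSEQ_I)
      fix r :: real assume r: "0 < r"
      have "(\<lambda>j. (1 - \<delta>) ^ j) \<longlonglongrightarrow> 0" using \<delta>pos \<delta>1 by (intro LIMSEQ_power_zero) auto
      from LIMSEQ_D[OF this r] obtain j where "\<forall>n\<ge>j. norm ((1 - \<delta>) ^ n - 0) < r" by blast
      then have j: "\<bar>(1 - \<delta>) ^ j\<bar> < r" by auto
      show "\<exists>no. \<forall>n\<ge>no. norm (D n - 0) < r"
      proof (intro exI[of _ "j * k"] allI impI)
        fix n assume "j * k \<le> n"
        then have "D n \<le> D (j * k)" by (rule Ddec')
        also have "\<dots> \<le> (1 - \<delta>) ^ j" by (rule Dj)
        finally show "norm (D n - 0) < r" using j Dnn[of n] by simp
      qed
    qed
    obtain l where l: "Mx \<longlonglongrightarrow> l" "\<forall>i. l \<le> Mx i"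
    proof -
      have "\<forall>i. mn 0 \<le> Mx i" using mnMx incseqD[OF mninc] by (meson order_trans zero_le)
      then show ?thesis using decseq_convergent[OF Mxdec, of "mn 0"] that by blast
    qed
    have lge: "mn t \<le> l" for t
      by (rule LIMSEQ_le_const[OF l(1)])
         (use mnMx incseqD[OF mninc] in \<open>meson order_trans\<close>)
    show ?thesis
    proof (intro exI ballI)
      fix x assume x: "x \<in> S"
      show "(\<lambda>t. P t x y) \<longlonglongrightarrow> l"
      proof (rule LIMSEQ_I)
        fix r :: real assume r: "0 < r"
        obtain n where n: "\<forall>m\<ge>n. norm (D m - 0) < r" using LIMSEQ_D[OF Dlim r] by auto
        show "\<exists>no. \<forall>m\<ge>no. norm (P m x y - l) < r"
        proof (intro exI allI impI)
          fix m assume "n \<le> m"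
          with n have "D m < r" by auto
          then show "norm (P m x y - l) < r"
          proof -
            have "P m x y \<le> Mx m" "mn m \<le> P m x y" "mn m \<le> l" "l \<le> Mx m"
              using Mxge[OF x, of m] mnle[OF x, of m] lge[of m] l(2) by auto
            then show ?thesis using \<open>D m < r\<close> unfolding D_def by simp
          qed
        qed
      qed
    qed
  qed
  then obtain p where p: "\<And>x y. x \<in> S \<Longrightarrow> (\<lambda>t. P t x y) \<longlonglongrightarrow> p y" by metis
  have pnn: "0 \<le> p y" for y by (rule LIMSEQ_le_const[OF p[OF z0]]) (auto simp: Pnn)
  have pout: "p y = 0" if "y \<notin> S" for y
  proof -
    have "(\<lambda>t. P t z0 y) = (\<lambda>t. 0)" using LSS[OF z0] that
      by (intro ext) (auto simp: P_def pmf_eq_0_set_pmf)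
    then show ?thesis using p[OF z0, of y] by (metis LIMSEQ_const_iff)
  qed
  have psum: "(\<Sum>y\<in>S. p y) = 1"
  proof -
    have "(\<lambda>t. \<Sum>y\<in>S. P t z0 y) \<longlonglongrightarrow> (\<Sum>y\<in>S. p y)" by (intro tendsto_sum p[OF z0])
    moreover have "(\<lambda>t. \<Sum>y\<in>S. P t z0 y) = (\<lambda>t. 1)" using P1[OF z0] by simp
    ultimately show ?thesis by (metis LIMSEQ_const_iff)
  qed
  have int1: "(\<integral>\<^sup>+y. ennreal (p y) \<partial>count_space UNIV) = 1"
    using psum pnn by (subst nn_integral_count_space'[OF fin]) (auto simp: pout sum_ennreal)
  define \<pi> where "\<pi> = embed_pmf p"
  have pmf\<pi>: "pmf \<pi> y = p y" for y unfolding \<pi>_def by (rule pmf_embed_pmf[OF pnn int1])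
  have set\<pi>: "set_pmf \<pi> \<subseteq> S" using pout by (auto simp: set_pmf_eq pmf\<pi>)
  have stat: "bind_pmf \<pi> K = \<pi>"
  proof (rule pmf_eqI)
    fix y
    have "(\<lambda>t. P (Suc t) z0 y) \<longlonglongrightarrow> p y" using p[OF z0] by (rule LIMSEQ_Suc)
    moreover have "P (Suc t) z0 y = (\<Sum>z\<in>S. P t z0 z * pmf (K z) y)" for t
      unfolding P_def LS by (rule pmf_bind_sum[OF fin LSS[OF z0]])
    ultimately have A: "(\<lambda>t. \<Sum>z\<in>S. P t z0 z * pmf (K z) y) \<longlonglongrightarrow> p y" by simp
    have B: "(\<lambda>t. \<Sum>z\<in>S. P t z0 z * pmf (K z) y) \<longlonglongrightarrow> (\<Sum>z\<in>S. p z * pmf (K z) y)"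
      by (intro tendsto_sum tendsto_mult_right p[OF z0])
    have "(\<Sum>z\<in>S. p z * pmf (K z) y) = p y" by (rule LIMSEQ_unique[OF B A])
    then show "pmf (bind_pmf \<pi> K) y = pmf \<pi> y"
      by (simp add: pmf_bind_sum[OF fin set\<pi>] pmf\<pi>)
  qed
  have uniq: "\<pi>' = \<pi>" if "set_pmf \<pi>' \<subseteq> S" "bind_pmf \<pi>' K = \<pi>'" for \<pi>'
  proof (rule pmf_eqI)
    fix y
    have it: "bind_pmf \<pi>' (\<lambda>z. L t z) = \<pi>'" for t
    proof (induction t)
      case 0 then show ?case by (simp add: L0 bind_return_pmf')
    next
      case (Suc t)
      have "bind_pmf \<pi>' (\<lambda>z. L (Suc t) z) = bind_pmf (bind_pmf \<pi>' (\<lambda>z. L t z)) K"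
        by (simp add: LS bind_assoc_pmf)
      then show ?case using Suc that(2) by simp
    qed
    have eq: "pmf \<pi>' y = (\<Sum>z\<in>S. pmf \<pi>' z * P t z y)" for t
      unfolding P_def by (subst it[symmetric, of t]) (rule pmf_bind_sum[OF fin that(1)])
    have "(\<lambda>t. \<Sum>z\<in>S. pmf \<pi>' z * P t z y) \<longlonglongrightarrow> (\<Sum>z\<in>S. pmf \<pi>' z * p y)"
      by (intro tendsto_sum tendsto_mult_left p) auto
    moreover have "(\<Sum>z\<in>S. pmf \<pi>' z * p y) = p y"
      using sum_pmf_eq_1[OF fin that(1)] by (simp add: sum_distrib_right[symmetric])
    ultimately have "(\<lambda>t. pmf \<pi>' y) \<longlonglongrightarrow> p y" by (simp add: eq[symmetric])
    then show "pmf \<pi>' y = pmf \<pi> y" by (simp add: LIMSEQ_const_iff pmf\<pi>)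
  qed
  have cv: "\<forall>\<xi>\<in>S. \<forall>\<eta>\<in>S. (\<lambda>t. pmf (L t \<eta>) \<xi>) \<longlonglongrightarrow> pmf \<pi> \<xi>"
  proof (intro ballI)
    fix \<xi> \<eta> assume "\<xi> \<in> S" "\<eta> \<in> S"
    from p[OF this(2), of \<xi>] show "(\<lambda>t. pmf (L t \<eta>) \<xi>) \<longlonglongrightarrow> pmf \<pi> \<xi>"
      unfolding P_def pmf\<pi> .
  qed
  show ?thesis
    apply (rule exI[of _ \<pi>])
    using set\<pi> stat uniq cv by blast
qed


lemma sum_upd: "finite V \<Longrightarrow> x \<in> V \<Longrightarrow> sum (f(x:=a)) V + (f x :: nat) = sum f V + a"
proof -
  assume V: "finite V" "x \<in> V"
  have "sum (f(x:=a)) V = a + sum (f(x:=a)) (V - {x})" using V by (simp add: sum.remove)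
  also have "sum (f(x:=a)) (V - {x}) = sum f (V - {x})" by (rule sum.cong) auto
  finally show ?thesis using V by (simp add: sum.remove)
qed

lemma finite_configs: "finite V \<Longrightarrow> finite (configs V M)"
proof -
  assume V: "finite V"
  have "configs V M \<subseteq> (\<lambda>g x. if x \<in> V then g x else 0) ` PiE V (\<lambda>_. {..M})"
  proof
    fix \<xi> assume \<xi>: "\<xi> \<in> configs V M"
    have "\<xi> x \<le> M" if "x \<in> V" for x
      using \<xi> member_le_sum[of x V \<xi>] V that by (auto simp: configs_def)
    then have "restrict \<xi> V \<in> PiE V (\<lambda>_. {..M})" by auto
    moreover have "\<xi> = (\<lambda>x. if x \<in> V then restrict \<xi> V x else 0)"
      using \<xi> by (auto simp: configs_def)
    ultimately show "\<xi> \<in> (\<lambda>g x. if x \<in> V then g x else 0) ` PiE V (\<lambda>_. {..M})" by blast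
  qed
  then show ?thesis using V by (rule finite_subset[OF _ finite_imageI[OF finite_PiE]]) auto
qed

lemma set_step:
  assumes "finite E" "E \<noteq> {}"
  shows "set_pmf (ie_step E \<xi>) = (\<Union>(x, y)\<in>E. \<Union>u1\<in>{0..\<xi> x}. \<Union>u2\<in>{0..\<xi> y}.
          {\<xi>(x := \<xi> x - u1 + u2, y := \<xi> y - u2 + u1)})"
    using assms unfolding ie_step_def by (simp add: set_pmf_of_set split_beta)

lemma in_step:
  assumes "finite E" "(x, y) \<in> E" "u1 \<le> \<xi> x" "u2 \<le> \<xi> y"
  shows "\<xi>(x := \<xi> x - u1 + u2, y := \<xi> y - u2 + u1) \<in> set_pmf (ie_step E \<xi>)"
proof -
  have "E \<noteq> {}" using assms by auto
  show ?thesis unfolding set_step[OF assms(1) \<open>E \<noteq> {}\<close>]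
    apply (rule UN_I[OF assms(2)])
    apply (simp only: case_prod_conv)
    apply (rule UN_I[of u1], simp add: assms)
    apply (rule UN_I[of u2], simp add: assms)
    by simp
qed

lemma step_configs:
  assumes G: "finite_connected_graph V E" and \<xi>: "\<xi> \<in> configs V M"
  shows "set_pmf (ie_step E \<xi>) \<subseteq> configs V M"
proof (cases "E = {}")
  case True then show ?thesis using \<xi> by (simp add: ie_step_def)
next
  case False
  have fV: "finite V" and EV: "E \<subseteq> V \<times> V" and irr: "\<And>x. (x, x) \<notin> E"
    using G by (auto simp: finite_connected_graph_def)
  have fE: "finite E" using fV EV finite_subset by blast
  show ?thesis
  proof
    fix \<zeta> assume "\<zeta> \<in> set_pmf (ie_step E \<xi>)"
    then obtain x y u1 u2 where \<zeta>: "\<zeta> = \<xi>(x := \<xi> x - u1 + u2, y := \<xi> y - u2 + u1)"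
      and xy: "(x, y) \<in> E" and u: "u1 \<le> \<xi> x" "u2 \<le> \<xi> y"
      unfolding set_step[OF fE False] by (auto simp del: fun_upd_apply)
    have xV: "x \<in> V" and yV: "y \<in> V" and ne: "x \<noteq> y" using xy EV irr by auto
    let ?f = "\<xi>(x := \<xi> x - u1 + u2)"
    have s1: "sum ?f V + \<xi> x = sum \<xi> V + (\<xi> x - u1 + u2)" by (rule sum_upd[OF fV xV])
    have s2: "sum (?f(y := \<xi> y - u2 + u1)) V + ?f y = sum ?f V + (\<xi> y - u2 + u1)"
      by (rule sum_upd[OF fV yV])
    have "sum \<zeta> V = sum \<xi> V" using s1 s2 ne u unfolding \<zeta> by simp
    then show "\<zeta> \<in> configs V M" using \<xi> xV yV unfolding \<zeta> configs_def by auto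
  qed
qed

lemma self_loop:
  assumes G: "finite_connected_graph V E"
  shows "\<xi> \<in> set_pmf (ie_step E \<xi>)"
proof (cases "E = {}")
  case True then show ?thesis by (simp add: ie_step_def)
next
  case False
  have fE: "finite E" using G finite_subset by (auto simp: finite_connected_graph_def)
  obtain x y where "(x, y) \<in> E" using False by auto
  from in_step[OF fE this, of 0 \<xi> 0] show ?thesis by simp
qed

definition R :: "('a \<times> 'a) set \<Rightarrow> (('a \<Rightarrow> nat) \<times> ('a \<Rightarrow> nat)) set" where
  "R E = {(a, b). b \<in> set_pmf (ie_step E a)}"

lemma law_set: "set_pmf (ie_law E n a) = {b. (a, b) \<in> R E ^^ n}"
  by (induction n) (auto simp: R_def relcomp_unfold)

lemma relpow_pad:
  assumes G: "finite_connected_graph V E" and "(a, b) \<in> R E ^^ n"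
  shows "(a, b) \<in> R E ^^ (n + m)"
  using assms(2) by (induction m) (auto simp: R_def self_loop[OF G])

lemma rtr_configs:
  assumes G: "finite_connected_graph V E" and "(a, b) \<in> (R E)\<^sup>*" "a \<in> configs V M"
  shows "b \<in> configs V M"
  using assms(2,3) by (induction rule: rtrancl_induct) (auto simp: R_def dest: step_configs[OF G])

definition mv :: "('a \<Rightarrow> nat) \<Rightarrow> 'a \<Rightarrow> 'a \<Rightarrow> 'a \<Rightarrow> nat" where
  "mv \<xi> x y = (\<lambda>z. \<xi> z - (if z = x then 1 else 0) + (if z = y then 1 else 0))"

lemma move:
  assumes G: "finite_connected_graph V E" and xy: "(x, y) \<in> E\<^sup>*" and x: "1 \<le> \<xi> x"
  shows "(\<xi>, mv \<xi> x y) \<in> (R E)\<^sup>*"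
  using xy
proof (induction rule: rtrancl_induct)
  case base
  have "mv \<xi> x x = \<xi>" using x by (auto simp: mv_def)
  then show ?case by simp
next
  case (step y w)
  have fE: "finite E" and irr: "\<And>x. (x, x) \<notin> E" using G finite_subset
    by (auto simp: finite_connected_graph_def)
  have ne: "y \<noteq> w" using step(2) irr by auto
  let ?\<eta> = "mv \<xi> x y"
  have "?\<eta> y \<ge> 1" using x by (auto simp: mv_def)
  then have "?\<eta>(y := ?\<eta> y - 1 + 0, w := ?\<eta> w - 0 + 1) \<in> set_pmf (ie_step E ?\<eta>)"
    by (intro in_step[OF fE step(2)]) auto
  moreover have "?\<eta>(y := ?\<eta> y - 1 + 0, w := ?\<eta> w - 0 + 1) = mv \<xi> x w"
    using ne x by (auto simp: mv_def)
  ultimately have "(?\<eta>, mv \<xi> x w) \<in> R E" by (simp add: R_def)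
  then show ?case using step(3) by simp
qed

lemma reach:
  assumes G: "finite_connected_graph V E" and v0: "v0 \<in> V"
  shows "\<xi> \<in> configs V M \<Longrightarrow> (\<xi>, (\<lambda>z. if z = v0 then M else 0)) \<in> (R E)\<^sup>*"
proof (induction "M - \<xi> v0" arbitrary: \<xi>)
  case 0
  have fV: "finite V" using G by (simp add: finite_connected_graph_def)
  have sum: "sum \<xi> V = M" and out: "\<And>x. x \<notin> V \<Longrightarrow> \<xi> x = 0" using 0 by (auto simp: configs_def)
  have "\<xi> v0 \<le> M" using member_le_sum[of v0 V \<xi>] fV v0 sum by simp
  with 0 have eq: "\<xi> v0 = M" by simp
  have "sum \<xi> V = \<xi> v0 + sum \<xi> (V - {v0})" using fV v0 by (simp add: sum.remove)
  then have "sum \<xi> (V - {v0}) = 0" using sum eq by simp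
  then have "\<forall>x\<in>V - {v0}. \<xi> x = 0" using fV by simp
  then have "\<xi> = (\<lambda>z. if z = v0 then M else 0)" using out eq by (metis DiffI singletonD)
  then show ?case by simp
next
  case (Suc n)
  have fV: "finite V" and conn: "\<forall>x\<in>V. \<forall>y\<in>V. (x, y) \<in> E\<^sup>*"
    using G by (auto simp: finite_connected_graph_def)
  have sum: "sum \<xi> V = M" and out: "\<And>x. x \<notin> V \<Longrightarrow> \<xi> x = 0" using Suc by (auto simp: configs_def)
  have "sum \<xi> V = \<xi> v0 + sum \<xi> (V - {v0})" using fV v0 by (simp add: sum.remove)
  then have "sum \<xi> (V - {v0}) \<noteq> 0" using sum Suc(2) by simp
  then obtain x where x: "x \<in> V" "x \<noteq> v0" "1 \<le> \<xi> x" using fV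
    by (metis (no_types, lifting) DiffD1 DiffD2 insertI1 less_one not_le sum.neutral)
  have "(x, v0) \<in> E\<^sup>*" using conn x(1) v0 by auto
  from move[where \<xi>=\<xi>, OF G this x(3)] have st: "(\<xi>, mv \<xi> x v0) \<in> (R E)\<^sup>*" .
  have inS: "mv \<xi> x v0 \<in> configs V M" by (rule rtr_configs[OF G st Suc(3)])
  have "mv \<xi> x v0 v0 = \<xi> v0 + 1" using x(2) by (simp add: mv_def)
  then have "n = M - mv \<xi> x v0 v0" using Suc(2) by simp
  from Suc(1)[OF this inS] st show ?case by simp
qed

theorem lemma3:
  fixes V :: "'a set" and E :: "('a \<times> 'a) set" and M :: nat
  assumes "finite_connected_graph V E"
  shows "\<exists>\<pi>. ie_stationary V E M \<pi> \<and> (\<forall>\<pi>'. ie_stationary V E M \<pi>' \<longrightarrow> \<pi>' = \<pi>) \<and>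
           (\<forall>\<xi>\<in>configs V M. \<forall>\<eta>\<in>configs V M.
              (\<lambda>t. pmf (ie_law E t \<eta>) \<xi>) \<longlonglongrightarrow> pmf \<pi> \<xi>)"
proof -
  note G = assms
  have fV: "finite V" and Vne: "V \<noteq> {}" using G by (auto simp: finite_connected_graph_def)
  obtain v0 where v0: "v0 \<in> V" using Vne by auto
  define S where "S = configs V M"
  define z0 where "z0 = (\<lambda>z. if z = v0 then M else (0::nat))"
  have fS: "finite S" unfolding S_def by (rule finite_configs[OF fV])
  have z0S: "z0 \<in> S" using fV v0 unfolding S_def z0_def configs_def
    by (auto simp: sum.delta)
  have "\<forall>\<xi>\<in>S. \<exists>n. (\<xi>, z0) \<in> R E ^^ n"
    using reach[OF G v0] unfolding S_def z0_def by (auto simp: rtrancl_power)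
  then obtain nf where nf: "\<And>\<xi>. \<xi> \<in> S \<Longrightarrow> (\<xi>, z0) \<in> R E ^^ nf \<xi>" by metis
  define k where "k = Max (nf ` S)"
  have rk: "z0 \<in> set_pmf (ie_law E k \<xi>)" if "\<xi> \<in> S" for \<xi>
  proof -
    have "nf \<xi> \<le> k" unfolding k_def using fS that by auto
    then have "k = nf \<xi> + (k - nf \<xi>)" by simp
    then have "(\<xi>, z0) \<in> R E ^^ k" using relpow_pad[OF G nf[OF that]] by metis
    then show ?thesis by (simp add: law_set)
  qed
  have "\<exists>\<pi>. (set_pmf \<pi> \<subseteq> S \<and> bind_pmf \<pi> (ie_step E) = \<pi>) \<and>
    (\<forall>\<pi>'. set_pmf \<pi>' \<subseteq> S \<and> bind_pmf \<pi>' (ie_step E) = \<pi>' \<longrightarrow> \<pi>' = \<pi>) \<and>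
    (\<forall>\<xi>\<in>S. \<forall>\<eta>\<in>S. (\<lambda>t. pmf (ie_law E t \<eta>) \<xi>) \<longlonglongrightarrow> pmf \<pi> \<xi>)"
    by (rule markov_conv[where L="ie_law E", OF fS _ _ _ z0S rk])
       (auto simp: S_def dest: step_configs[OF G])
  then show ?thesis unfolding ie_stationary_def S_def .
qed

end
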